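(* For every $1$-Sperner hypergraph ${\cal H}=(V,{\cal E})$ with $V\neq\emptyset$, we have $|{\cal E}|\le|V|$.
   Context: A hypergraph ${\cal H}=(V,{\cal E})$ consists of a finite vertex set $V$ and a set ${\cal E}$ of subsets of $V$. It is $1$-Sperner if every two distinct hyperedges $e,f$ satisfy $\min\{|e\setminus f|,|f\setminus e|\}=1$. *)

theory Defs
  imports Main
begin

definition hypergraph :: "'a set \<Rightarrow> 'a set set \<Rightarrow> bool" where
  "hypergraph V E \<longleftrightarrow> finite V \<and> (\<forall>e\<in>E. e \<subseteq> V)"

definition one_sperner :: "'a set set \<Rightarrow> bool" where
  "one_sperner E \<longleftrightarrow>
     (\<forall>e\<in>E. \<forall>f\<in>E. e \<noteq> f \<longrightarrow> min (card (e - f)) (card (f - e)) = 1)"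

end

theory Submission
  imports Defs
begin

lemma sp_sub:
  assumes "one_sperner E" "a \<in> E" "b \<in> E" "a \<subseteq> b"
  shows "a = b"
proof (rule ccontr)
  assume "a \<noteq> b"
  with assms have "min (card (a - b)) (card (b - a)) = 1" unfolding one_sperner_def by blast
  moreover have "a - b = {}" using assms(4) by blast
  ultimately show False by simp
qed

lemma sp_big:
  assumes "one_sperner E" "a \<in> E" "b \<in> E" "card (a - b) \<ge> 2"
  shows "card (b - a) = 1"
proof -
  have "a \<noteq> b" using assms(4) by auto
  with assms have "min (card (a - b)) (card (b - a)) = 1" unfolding one_sperner_def by blast
  with assms(4) show ?thesis by (simp add: min_def split: if_splits)
qed

lemma sp_le:
  assumes "one_sperner E" "a \<in> E" "b \<in> E" "a \<noteq> b" "card a \<le> card b"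
    "finite a" "finite b"
  shows "card (a - b) = 1"
proof -
  have "\<not> a \<subseteq> b" using sp_sub[OF assms(1-3)] assms(4) by blast
  then have "a - b \<noteq> {}" by blast
  then have c1: "card (a - b) \<ge> 1" using assms(6) by (simp add: Suc_leI card_gt_0_iff)
  have "\<not> card (a - b) \<ge> 2"
  proof
    assume h: "card (a - b) \<ge> 2"
    have "card (b - a) = 1" using sp_big[OF assms(1-3) h] .
    moreover have "card b = card (b \<inter> a) + card (b - a)"
      using assms(7) by (rule card_Int_Diff)
    moreover have "card a = card (a \<inter> b) + card (a - b)"
      using assms(6) by (rule card_Int_Diff)
    ultimately show False using h assms(5) by (simp add: inf_commute)
  qed
  with c1 show ?thesis by simp
qed

lemma single_diff:
  assumes "finite A" "card A = 1" "z \<in> A"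
  shows "A = {z}"
  using assms by (metis card_1_singletonE singletonD)

lemma good_vertex:
  assumes fin: "\<forall>f\<in>E. finite f" and sp: "one_sperner E"
    and eE: "e \<in> E" and emin: "\<forall>f\<in>E. card e \<le> card f"
    and gsE: "gs \<in> E" and gse: "gs \<noteq> e" and gsmax: "\<forall>f\<in>E - {e}. card f \<le> card gs"
    and ze: "z \<in> e" and zgs: "z \<notin> gs"
    and gE: "g \<in> E" and hE: "h \<in> E" and zg: "z \<in> g" and zh: "z \<notin> h"
  shows "g - {z} \<subseteq> h"
proof -
  have step1: "e - {z} \<subseteq> f" if "f \<in> E" "z \<notin> f" for f
  proof -
    have "f \<noteq> e" using that ze by blast
    hence "card (e - f) = 1" using sp_le[OF sp eE that(1)] emin fin eE that(1) by auto
    hence "e - f = {z}" using single_diff[of "e - f" z] fin eE that ze by auto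
    thus ?thesis by blast
  qed
  show ?thesis
  proof (cases "g = e")
    case True thus ?thesis using step1 hE zh by simp
  next
    case gne: False
    have "g \<noteq> gs" using zg zgs by blast
    hence "card (g - gs) = 1" using sp_le[OF sp gE gsE] gsmax gE gne fin gsE by auto
    hence "g - gs = {z}" using single_diff[of "g - gs" z] fin gE zg zgs by auto
    hence ggs: "g - {z} \<subseteq> gs" by blast
    have egs: "e - {z} \<subseteq> gs" using step1 gsE zgs by blast
    have ehz: "e - {z} \<subseteq> h" using step1 hE zh by blast
    have "card (e - g) = 1" using sp_le[OF sp eE gE] emin gE gne fin eE by auto
    then obtain w where ew: "e - g = {w}" by (metis card_1_singletonE)
    hence wz: "w \<noteq> z" using zg by blast
    show ?thesis
    proof (rule ccontr)
      assume "\<not> g - {z} \<subseteq> h"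
      then obtain x where x: "x \<in> g" "x \<noteq> z" "x \<notin> h" by blast
      have "{z, x} \<subseteq> g - h" using x zg zh by blast
      hence "card (g - h) \<ge> 2" using x(2) fin gE
        by (metis card_2_iff card_mono finite_Diff)
      hence c: "card (h - g) = 1" using sp_big[OF sp gE hE] by blast
      have wh: "w \<in> h - g" using ew wz ehz by blast
      hence hg: "h - g = {w}" using single_diff[of "h - g" w] c fin hE by auto
      have "h \<subseteq> gs"
      proof
        fix v assume v: "v \<in> h"
        show "v \<in> gs"
        proof (cases "v \<in> g")
          case True thus ?thesis using v zh ggs by blast
        next
          case False hence "v = w" using hg v by blast
          thus ?thesis using ew wz egs by blast
        qed
      qed
      hence "h = gs" using sp_sub[OF sp hE gsE] by blast
      thus False using x ggs by blast
    qed
  qed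
qed

lemma sp_image:
  assumes "one_sperner E" "\<forall>a\<in>E. \<forall>b\<in>E. \<phi> a - \<phi> b = a - b"
  shows "one_sperner (\<phi> ` E)" and "inj_on \<phi> E"
proof -
  show "inj_on \<phi> E"
  proof
    fix a b assume "a \<in> E" "b \<in> E" "\<phi> a = \<phi> b"
    hence "a - b = {}" "b - a = {}" using assms(2) by (metis Diff_cancel, metis Diff_cancel)
    thus "a = b" by blast
  qed
  show "one_sperner (\<phi> ` E)"
    unfolding one_sperner_def
  proof (intro ballI impI)
    fix a' b' assume "a' \<in> \<phi> ` E" "b' \<in> \<phi> ` E" "a' \<noteq> b'"
    then obtain a b where ab: "a \<in> E" "b \<in> E" "a' = \<phi> a" "b' = \<phi> b" by blast
    with \<open>a' \<noteq> b'\<close> have "a \<noteq> b" by auto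
    moreover have "min (card (a - b)) (card (b - a)) = 1"
      using assms(1) ab(1,2) \<open>a \<noteq> b\<close> unfolding one_sperner_def by blast
    ultimately show "min (card (a' - b')) (card (b' - a')) = 1"
      using assms(2) ab by simp
  qed
qed

lemma main:
  "finite V \<Longrightarrow> \<forall>e\<in>E. e \<subseteq> V \<Longrightarrow> one_sperner E \<Longrightarrow> card E \<le> max 1 (card V)"
proof (induction "card V" arbitrary: V E rule: less_induct)
  case less
  note sp = less.prems(3)
  have finE: "finite E" using less.prems(1,2)
    by (meson Pow_iff finite_Pow_iff finite_subset subsetI)
  have fin: "\<forall>f\<in>E. finite f" using less.prems(1,2) finite_subset by blast
  show ?case
  proof (cases "card E \<le> 1")
    case True thus ?thesis by simp
  next
    case False
    hence Ene: "E \<noteq> {}" by auto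
    define m where "m = Min (card ` E)"
    have "m \<in> card ` E" unfolding m_def using finE Ene by simp
    then obtain e where eE: "e \<in> E" and em: "card e = m" by blast
    have emin: "\<forall>f\<in>E. card e \<le> card f" using em finE unfolding m_def by simp
    have "E - {e} \<noteq> {}"
    proof
      assume "E - {e} = {}" hence "E \<subseteq> {e}" by blast
      hence "card E \<le> card {e}" by (intro card_mono) auto
      hence "card E \<le> 1" by simp
      thus False using False by simp
    qed
    define M where "M = Max (card ` (E - {e}))"
    have "M \<in> card ` (E - {e})" unfolding M_def using finE \<open>E - {e} \<noteq> {}\<close> by simp
    then obtain gs where gsE': "gs \<in> E - {e}" and gsM: "card gs = M" by blast
    have gsmax: "\<forall>f\<in>E - {e}. card f \<le> card gs" using gsM finE unfolding M_def by simp
    have gsE: "gs \<in> E" and gse: "gs \<noteq> e" using gsE' by auto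
    have "\<not> e \<subseteq> gs" using sp_sub[OF sp eE gsE] gse by blast
    then obtain z where ze: "z \<in> e" and zgs: "z \<notin> gs" by blast
    have zV: "z \<in> V" using ze eE less.prems(2) by blast
    have good: "\<And>g h. g \<in> E \<Longrightarrow> h \<in> E \<Longrightarrow> z \<in> g \<Longrightarrow> z \<notin> h \<Longrightarrow> g - {z} \<subseteq> h"
      using good_vertex[OF fin sp eE emin gsE gse gsmax ze zgs] by blast
    define Ez where "Ez = {g\<in>E. z \<in> g}"
    define En where "En = {h\<in>E. z \<notin> h}"
    have cardE: "card E = card Ez + card En"
    proof -
      have "E = Ez \<union> En" "Ez \<inter> En = {}" unfolding Ez_def En_def by auto
      thus ?thesis using finE by (metis card_Un_disjoint finite_Un)
    qed
    have cVz: "card (V - {z}) < card V" using less.prems(1) zV by (rule card_Diff1_less)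
    have difz: "\<forall>a\<in>Ez. \<forall>b\<in>Ez. (a - {z}) - (b - {z}) = a - b" unfolding Ez_def by blast
    have spEz: "one_sperner Ez" using sp unfolding one_sperner_def Ez_def by blast
    have spEn: "one_sperner En" using sp unfolding one_sperner_def En_def by blast
    have spEz': "one_sperner ((\<lambda>g. g - {z}) ` Ez)" and injz: "inj_on (\<lambda>g. g - {z}) Ez"
      using sp_image[OF spEz difz] by auto
    have cEz: "card ((\<lambda>g. g - {z}) ` Ez) = card Ez" using card_image[OF injz] .
    show ?thesis
    proof (cases "En = {}")
      case True
      have "card Ez \<le> max 1 (card (V - {z}))"
        using less.hyps[OF cVz, of "(\<lambda>g. g - {z}) ` Ez"] less.prems spEz' cEz
        unfolding Ez_def by fastforce
      thus ?thesis using cardE True cVz by simp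
    next
      case Enne: False
      show ?thesis
      proof (cases "Ez = {}")
        case True
        have "card En \<le> max 1 (card (V - {z}))"
          using less.hyps[OF cVz, of En] less.prems spEn
          unfolding En_def by fastforce
        thus ?thesis using cardE True cVz by simp
      next
        case Ezne: False
        define P where "P = \<Inter> En"
        define Q where "Q = V - {z} - P"
        obtain h0 where h0: "h0 \<in> En" using Enne by blast
        have PV: "P \<subseteq> V - {z}" unfolding P_def using h0 less.prems(2) unfolding En_def by blast
        have finV': "finite (V - {z})" using less.prems(1) by simp
        have finP: "finite P" using PV finV' finite_subset by blast
        have finQ: "finite Q" unfolding Q_def using finV' by simp
        have cPQ: "card P + card Q = card (V - {z})"
          unfolding Q_def using PV finV' by (metis card_Diff_subset finP le_add_diff_inverse card_mono)
        have cP: "card P < card V" using PV cVz finV' by (meson card_mono le_less_trans)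
        have cQ: "card Q < card V" using cVz finV' unfolding Q_def
          by (meson Diff_subset card_mono le_less_trans)
        have h1: "card Ez \<le> max 1 (card P)"
        proof -
          have "\<forall>a\<in>(\<lambda>g. g - {z}) ` Ez. a \<subseteq> P"
            unfolding P_def using good unfolding Ez_def En_def by blast
          thus ?thesis using less.hyps[OF cP finP _ spEz'] cEz by simp
        qed
        have difP: "\<forall>a\<in>En. \<forall>b\<in>En. (a - P) - (b - P) = a - b" unfolding P_def by blast
        have spEn': "one_sperner ((\<lambda>h. h - P) ` En)" and injP: "inj_on (\<lambda>h. h - P) En"
          using sp_image[OF spEn difP] by auto
        have h2: "card En \<le> max 1 (card Q)"
        proof -
          have "\<forall>a\<in>(\<lambda>h. h - P) ` En. a \<subseteq> Q"
            unfolding Q_def En_def using less.prems(2) by blast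
          thus ?thesis using less.hyps[OF cQ finQ _ spEn'] card_image[OF injP] by simp
        qed
        have "V - {z} \<noteq> {}"
        proof
          assume emp: "V - {z} = {}"
          obtain g where g: "g \<in> Ez" using Ezne by blast
          have "h0 = {}" using h0 emp less.prems(2) unfolding En_def by blast
          hence "h0 \<subseteq> g" by simp
          hence "h0 = g" using sp_sub[OF sp] h0 g unfolding En_def Ez_def by blast
          thus False using h0 g unfolding En_def Ez_def by blast
        qed
        hence "card (V - {z}) \<ge> 1" using finV' by (simp add: Suc_leI card_gt_0_iff)
        hence "card V = card (V - {z}) + 1" using cVz zV less.prems(1)
          by (simp add: card_Diff_singleton)
        thus ?thesis using h1 h2 cardE cPQ \<open>card (V - {z}) \<ge> 1\<close> by linarith
      qed
    qed
  qed
qed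

theorem corollary16:
  fixes V :: "'a set" and E :: "'a set set"
  assumes "hypergraph V E" and "one_sperner E" and "V \<noteq> {}"
  shows "card E \<le> card V"
proof -
  have "finite V" "\<forall>e\<in>E. e \<subseteq> V" using assms(1) unfolding hypergraph_def by auto
  hence "card E \<le> max 1 (card V)" using main assms(2) by blast
  moreover have "card V \<ge> 1" using assms(3) \<open>finite V\<close> by (simp add: Suc_leI card_gt_0_iff)
  ultimately show ?thesis by simp
qed

end
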